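(* For all $z\in\mathbb{R}$, $$\chi_1(z)=\sqrt{\pi}\,\varphi_1(z)+\psi_1(z),\qquad \chi_2(z)=\sqrt{\pi}\,\bigl[\varphi_2(z)-\ln 2\;\varphi_1(z)\bigr]+\psi_2(z),$$ where $\varphi_1,\varphi_2$ are odd and $\psi_1,\psi_2$ are even functions.
   Context: Define $\chi_0(z)=1$ and, for $i\ge1$, $\chi_i(z)=2\int_0^z dy\,e^{y^2}\int_{-\infty}^y du\,e^{-u^2}\chi_{i-1}(u)$, $z\in\mathbb{R}$. Define $\varphi_1(x)=\int_0^x e^{t^2}dt$; $\psi_1(x)=2\int_0^x dt\,e^{t^2}\int_0^t du\,e^{-u^2}$; $\varphi_2(x)=2\int_0^x dt_2\,e^{t_2^2}\int_0^{t_2}du_2\,e^{-u_2^2}\int_0^{u_2}dt_1\,e^{t_1^2}$; $\psi_2(x)=4\int_0^x dt_2\,e^{t_2^2}\int_0^{t_2}du_2\,e^{-u_2^2}\int_0^{u_2}dt_1\,e^{t_1^2}\int_0^{t_1}du_1\,e^{-u_1^2}$. *)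

theory Defs
  imports "HOL-Analysis.Analysis"
begin

text \<open>Oriented integral from a to b (Henstock-Kurzweil), so that
  the integral from 0 to z is meaningful also for negative z.\<close>
definition oint :: "real \<Rightarrow> real \<Rightarrow> (real \<Rightarrow> real) \<Rightarrow> real" where
  "oint a b f = (if a \<le> b then integral {a..b} f else - integral {b..a} f)"

primrec chi :: "nat \<Rightarrow> real \<Rightarrow> real" where
  "chi 0 z = 1"
| "chi (Suc i) z =
     2 * oint 0 z (\<lambda>y. exp (y^2) * integral {..y} (\<lambda>u. exp (-(u^2)) * chi i u))"

definition phi1 :: "real \<Rightarrow> real" where
  "phi1 x = oint 0 x (\<lambda>t. exp (t^2))"

definition psi1 :: "real \<Rightarrow> real" where
  "psi1 x = 2 * oint 0 x (\<lambda>t. exp (t^2) * oint 0 t (\<lambda>u. exp (-(u^2))))"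

definition phi2 :: "real \<Rightarrow> real" where
  "phi2 x = 2 * oint 0 x (\<lambda>t2. exp (t2^2) * oint 0 t2 (\<lambda>u2. exp (-(u2^2)) *
              oint 0 u2 (\<lambda>t1. exp (t1^2))))"

definition psi2 :: "real \<Rightarrow> real" where
  "psi2 x = 4 * oint 0 x (\<lambda>t2. exp (t2^2) * oint 0 t2 (\<lambda>u2. exp (-(u2^2)) *
              oint 0 u2 (\<lambda>t1. exp (t1^2) * oint 0 t1 (\<lambda>u1. exp (-(u1^2))))))"

end

theory Submission
  imports Defs "HOL-Probability.Probability" "HOL-Real_Asymp.Real_Asymp"
begin

lemma oint_pos: "0 \<le> x \<Longrightarrow> oint 0 x f = integral {0..x} f"
  by (simp add: oint_def)

lemma oint_neg: "x \<le> 0 \<Longrightarrow> oint 0 x f = - integral {x..0} f"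
  by (cases "x = 0") (auto simp: oint_def)

lemma oint_zero[simp]: "oint 0 0 f = 0"
  by (simp add: oint_def)

lemma oint_split:
  assumes f: "continuous_on UNIV f" and "a \<le> 0" "a \<le> t"
  shows "oint 0 t f = integral {a..t} f - integral {a..0} f"
proof (cases "0 \<le> t")
  case True
  have "integral {a..0} f + integral {0..t} f = integral {a..t} f"
    using Henstock_Kurzweil_Integration.integral_combine[where a=a and c=0 and b=t and f=f] assms True
    by (auto intro: integrable_continuous_real continuous_on_subset[OF f])
  then show ?thesis using True by (simp add: oint_pos)
next
  case False
  have "integral {a..t} f + integral {t..0} f = integral {a..0} f"
    by (rule Henstock_Kurzweil_Integration.integral_combine) (use assms False in \<open>auto intro: integrable_continuous_real continuous_on_subset[OF f]\<close>)
  then show ?thesis using False by (simp add: oint_neg)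
qed

lemma oint_deriv:
  assumes f: "continuous_on UNIV f"
  shows "((\<lambda>x. oint 0 x f) has_real_derivative f x) (at x)"
proof -
  define a where "a = min 0 x - 1"
  define b where "b = max 0 x + 1"
  have "((\<lambda>t. integral {a..t} f) has_real_derivative f x) (at x within {a..b})"
    by (rule integral_has_real_derivative) (use f in \<open>auto intro: continuous_on_subset simp: a_def b_def\<close>)
  then have "((\<lambda>t. integral {a..t} f) has_real_derivative f x) (at x)"
    by (simp add: at_within_Icc_at a_def b_def)
  then have "((\<lambda>t. integral {a..t} f - integral {a..0} f) has_real_derivative f x) (at x)"
    by (auto intro!: derivative_eq_intros)
  then show ?thesis
    by (rule has_field_derivative_transform_within_open[where S="{a<..}"])
       (auto simp: a_def intro!: oint_split[OF f, symmetric])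
qed

lemma oint_cont: "continuous_on UNIV f \<Longrightarrow> continuous_on UNIV (\<lambda>x. oint 0 x f)"
  by (rule DERIV_continuous_on[where D=f]) (rule DERIV_subset[OF oint_deriv], auto)

lemma oint_eq:
  assumes f: "continuous_on UNIV f" and F: "\<And>x. (F has_real_derivative f x) (at x)"
  shows "oint 0 x f = F x - F 0"
proof -
  have "\<forall>x. ((\<lambda>x. oint 0 x f - F x) has_real_derivative 0) (at x)"
    using oint_deriv[OF f] F by (auto intro!: derivative_eq_intros)
  then have "oint 0 x f - F x = oint 0 0 f - F 0"
    by (rule DERIV_isconst_all)
  then show ?thesis by simp
qed

lemma oint_odd:
  assumes f: "continuous_on UNIV f" and e: "\<And>x. f (-x) = f x"
  shows "oint 0 (-x) f = - oint 0 x f"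
proof -
  have "\<forall>x. ((\<lambda>x. oint 0 (-x) f + oint 0 x f) has_real_derivative 0) (at x)"
    using e by (auto intro!: derivative_eq_intros oint_deriv[OF f, THEN DERIV_chain2])
  then have "oint 0 (-x) f + oint 0 x f = oint 0 (-0) f + oint 0 0 f"
    by (rule DERIV_isconst_all)
  then show ?thesis by simp
qed

lemma oint_even:
  assumes f: "continuous_on UNIV f" and e: "\<And>x. f (-x) = - f x"
  shows "oint 0 (-x) f = oint 0 x f"
proof -
  have "\<forall>x. ((\<lambda>x. oint 0 (-x) f - oint 0 x f) has_real_derivative 0) (at x)"
    using e by (auto intro!: derivative_eq_intros oint_deriv[OF f, THEN DERIV_chain2])
  then have "oint 0 (-x) f - oint 0 x f = oint 0 (-0) f - oint 0 0 f"
    by (rule DERIV_isconst_all)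
  then show ?thesis by simp
qed


lemma imp_int:
  fixes f F :: "real \<Rightarrow> real"
  assumes F: "\<And>x. (F has_real_derivative f x) (at x)" and f: "continuous_on UNIV f"
    and nn: "\<And>x. x < y \<Longrightarrow> 0 \<le> f x" and lim: "(F \<longlongrightarrow> 0) at_bot"
  shows "(f has_integral F y) {..y}"
proof -
  have cF: "isCont F y" using F DERIV_isCont by blast
  then have lF: "(F \<longlongrightarrow> F y) (at_left y)"
    using cF unfolding isCont_def by (metis filterlim_at_split)
  have cf: "\<And>x. isCont f x" using f by (simp add: continuous_on_eq_continuous_at)
  note r = interval_integral_FTC_nonneg[of "-\<infinity>" "ereal y" F f 0 "F y"]
  have r1: "set_integrable lborel {..<y} f" and r2: "(LBINT x=-\<infinity>..ereal y. f x) = F y - 0"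
    using r[OF _ F cf _ _ ] lim lF
    by (auto simp: ereal_tendsto_simps1 intro!: AE_I2 nn)
  have "set_lebesgue_integral lborel {..<y} f = F y"
    using r2 by (simp add: interval_lebesgue_integral_def)
  then have "(f has_integral F y) {..<y}"
    using set_borel_integral_eq_integral[OF r1] by (metis has_integral_integral)
  then show ?thesis
  proof (subst has_integral_spike_set_eq[where T="{..<y}"])
    show "negligible {x \<in> {..y} - {..<y}. f x \<noteq> 0}"
      by (rule negligible_subset[of "{y}"]) auto
    show "negligible {x \<in> {..<y} - {..y}. f x \<noteq> 0}" by (rule negligible_subset[of "{}"]) auto
  qed
qed

definition E0 :: "real \<Rightarrow> real" where "E0 x = oint 0 x (\<lambda>u. exp (-(u^2)))"

lemma cont_h: "continuous_on UNIV (\<lambda>u::real. exp (-(u^2)))"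
  by (intro continuous_intros)

lemma cont_g: "continuous_on UNIV (\<lambda>u::real. exp (u^2))"
  by (intro continuous_intros)

lemma E0_deriv[derivative_intros]: "(E0 has_real_derivative exp (-(x^2))) (at x)"
  unfolding E0_def[abs_def] by (rule oint_deriv[OF cont_h])

lemma D_deriv[derivative_intros]: "(phi1 has_real_derivative exp (x^2)) (at x)"
  unfolding phi1_def[abs_def] by (rule oint_deriv[OF cont_g])

lemma E0_cont[continuous_intros]: "continuous_on UNIV E0"
  unfolding E0_def[abs_def] by (rule oint_cont[OF cont_h])

lemma D_cont[continuous_intros]: "continuous_on UNIV phi1"
  unfolding phi1_def[abs_def] by (rule oint_cont[OF cont_g])

lemma E0_odd: "E0 (-x) = - E0 x"
  unfolding E0_def by (rule oint_odd[OF cont_h]) simp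

lemma D_odd: "phi1 (-x) = - phi1 x"
  unfolding phi1_def by (rule oint_odd[OF cont_g]) simp

lemma E0_0[simp]: "E0 0 = 0" by (simp add: E0_def)
lemma D_0[simp]: "phi1 0 = 0" by (simp add: phi1_def)

lemma E0_lim: "(E0 \<longlongrightarrow> sqrt pi / 2) at_top"
proof -
  have hb: "has_bochner_integral lborel (\<lambda>x. indicator {0..} x *\<^sub>R exp (- x\<^sup>2)) (sqrt pi / 2)"
    by (rule gaussian_moment_0)
  have si: "set_integrable lborel {0..} (\<lambda>x::real. exp (- x\<^sup>2))"
    using hb unfolding set_integrable_def by (auto intro: integrable.intros)
  have sv: "set_lebesgue_integral lborel {0..} (\<lambda>x::real. exp (- x\<^sup>2)) = sqrt pi / 2"
    using hb unfolding set_lebesgue_integral_def by (simp add: has_bochner_integral_integral_eq)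
  have t: "((\<lambda>b. set_lebesgue_integral lborel {0..b} (\<lambda>x::real. exp (- x\<^sup>2))) \<longlongrightarrow> sqrt pi / 2) at_top"
    using tendsto_set_lebesgue_integral_at_top[OF _ si] sv by simp
  have "\<forall>\<^sub>F b in at_top. set_lebesgue_integral lborel {0..b} (\<lambda>x::real. exp (- x\<^sup>2)) = E0 b"
  proof (rule eventually_mono[OF eventually_ge_at_top[of 0]])
    fix b :: real assume b: "0 \<le> b"
    have "set_integrable lborel {0..b} (\<lambda>x::real. exp (- x\<^sup>2))"
      by (rule borel_integrable_atLeastAtMost') (intro continuous_intros)
    then show "set_lebesgue_integral lborel {0..b} (\<lambda>x::real. exp (- x\<^sup>2)) = E0 b"
      using set_borel_integral_eq_integral(2) b by (simp add: E0_def oint_pos)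
  qed
  then show ?thesis using t by (rule Lim_transform_eventually[rotated])
qed

lemma E0_lim_bot: "(E0 \<longlongrightarrow> - (sqrt pi / 2)) at_bot"
proof -
  have "((\<lambda>x. - E0 x) \<longlongrightarrow> - (sqrt pi / 2)) at_top"
    by (intro tendsto_intros E0_lim)
  then have "((\<lambda>x. E0 (-x)) \<longlongrightarrow> - (sqrt pi / 2)) at_top"
    by (simp add: E0_odd)
  then show ?thesis
    unfolding at_bot_mirror tendsto_compose_filtermap[symmetric] by (simp add: o_def)
qed

lemma gauss_int: "((\<lambda>u. exp (-(u^2))) has_integral (sqrt pi / 2 + E0 y)) {..y}"
proof -
  have "((\<lambda>x. sqrt pi / 2 + E0 x) \<longlongrightarrow> sqrt pi / 2 + - (sqrt pi / 2)) at_bot"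
    by (intro tendsto_intros E0_lim_bot)
  then show ?thesis
    by (intro imp_int[where F="\<lambda>x. sqrt pi / 2 + E0 x" and f="\<lambda>u. exp (-(u^2))" and y=y])
       (auto intro!: derivative_eq_intros cont_h)
qed


definition P :: "real \<Rightarrow> real" where "P x = oint 0 x (\<lambda>t. exp (t^2) * E0 t)"
definition Q :: "real \<Rightarrow> real" where "Q x = oint 0 x (\<lambda>u. exp (-(u^2)) * phi1 u)"
definition R :: "real \<Rightarrow> real" where "R x = oint 0 x (\<lambda>u. exp (-(u^2)) * P u)"

lemma cP: "continuous_on UNIV (\<lambda>t. exp (t^2) * E0 t)" by (intro continuous_intros)
lemma P_deriv[derivative_intros]: "(P has_real_derivative exp (x^2) * E0 x) (at x)"
  unfolding P_def[abs_def] by (rule oint_deriv[OF cP])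
lemma P_cont[continuous_intros]: "continuous_on UNIV P"
  unfolding P_def[abs_def] by (rule oint_cont[OF cP])
lemma P_even: "P (-x) = P x"
  unfolding P_def by (rule oint_even[OF cP]) (simp add: E0_odd)
lemma P_0[simp]: "P 0 = 0" by (simp add: P_def)

lemma cQ: "continuous_on UNIV (\<lambda>u. exp (-(u^2)) * phi1 u)" by (intro continuous_intros)
lemma Q_deriv[derivative_intros]: "(Q has_real_derivative exp (-(x^2)) * phi1 x) (at x)"
  unfolding Q_def[abs_def] by (rule oint_deriv[OF cQ])
lemma Q_cont[continuous_intros]: "continuous_on UNIV Q"
  unfolding Q_def[abs_def] by (rule oint_cont[OF cQ])
lemma Q_even: "Q (-x) = Q x"
  unfolding Q_def by (rule oint_even[OF cQ]) (simp add: D_odd)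
lemma Q_0[simp]: "Q 0 = 0" by (simp add: Q_def)

lemma cR: "continuous_on UNIV (\<lambda>u. exp (-(u^2)) * P u)" by (intro continuous_intros)
lemma R_deriv[derivative_intros]: "(R has_real_derivative exp (-(x^2)) * P x) (at x)"
  unfolding R_def[abs_def] by (rule oint_deriv[OF cR])
lemma R_cont[continuous_intros]: "continuous_on UNIV R"
  unfolding R_def[abs_def] by (rule oint_cont[OF cR])
lemma R_odd: "R (-x) = - R x"
  unfolding R_def by (rule oint_odd[OF cR]) (simp add: P_even)
lemma R_0[simp]: "R 0 = 0" by (simp add: R_def)

lemma psi1_eq: "psi1 x = 2 * P x"
  by (simp add: psi1_def P_def E0_def)
lemma phi2_eq: "phi2 x = 2 * oint 0 x (\<lambda>t. exp (t^2) * Q t)"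
  by (simp add: phi2_def Q_def phi1_def)
lemma psi2_eq: "psi2 x = 4 * oint 0 x (\<lambda>t. exp (t^2) * R t)"
  by (simp add: psi2_def R_def P_def E0_def)

lemma phi2_odd: "phi2 (-x) = - phi2 x"
  unfolding phi2_eq by (subst oint_odd) (auto intro!: continuous_intros simp: Q_even)
lemma psi1_even: "psi1 (-x) = psi1 x"
  unfolding psi1_eq by (simp add: P_even)
lemma psi2_even: "psi2 (-x) = psi2 x"
  unfolding psi2_eq by (subst oint_even) (auto intro!: continuous_intros simp: R_odd)

lemma chi1_eq: "chi 1 z = sqrt pi * phi1 z + psi1 z"
proof -
  have "chi 1 z = 2 * oint 0 z (\<lambda>y. exp (y^2) * (sqrt pi / 2 + E0 y))"
  proof -
    have "\<And>y. integral {..y} (\<lambda>u. exp (-(u^2))) = sqrt pi / 2 + E0 y"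
      by (rule integral_unique[OF gauss_int])
    then show ?thesis by simp
  qed
  also have "oint 0 z (\<lambda>y. exp (y^2) * (sqrt pi / 2 + E0 y)) = (sqrt pi * phi1 z + 2 * P z) / 2 - (sqrt pi * phi1 0 + 2 * P 0) / 2"
    by (rule oint_eq) (auto intro!: continuous_intros derivative_eq_intros simp: algebra_simps)
  finally show ?thesis by (simp add: psi1_eq)
qed


definition M :: "real \<Rightarrow> real" where "M x = sqrt pi / 2 - E0 x"
definition PM :: "real \<Rightarrow> real" where "PM x = sqrt pi / 2 * phi1 x - P x"

lemma M_deriv[derivative_intros]: "(M has_real_derivative - exp (-(x^2))) (at x)"
  unfolding M_def[abs_def] by (auto intro!: derivative_eq_intros)
lemma M_cont[continuous_intros]: "continuous_on UNIV M"
  unfolding M_def[abs_def] by (intro continuous_intros)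
lemma PM_deriv[derivative_intros]: "(PM has_real_derivative exp (x^2) * M x) (at x)"
  unfolding PM_def[abs_def] by (auto intro!: derivative_eq_intros simp: M_def algebra_simps)
lemma PM_cont[continuous_intros]: "continuous_on UNIV PM"
  unfolding PM_def[abs_def] by (intro continuous_intros)
lemma PM_0[simp]: "PM 0 = 0" by (simp add: PM_def)

lemma deriv_mono0:
  fixes f :: "real \<Rightarrow> real"
  assumes "0 \<le> x" "\<And>t. 0 \<le> t \<Longrightarrow> t \<le> x \<Longrightarrow> (f has_real_derivative f' t) (at t)"
    "\<And>t. 0 \<le> t \<Longrightarrow> t \<le> x \<Longrightarrow> 0 \<le> f' t"
  shows "f 0 \<le> f x"
  by (rule DERIV_nonneg_imp_nondecreasing[OF assms(1)]) (use assms in blast)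

lemma E0_mono: "x \<le> y \<Longrightarrow> E0 x \<le> E0 y"
  by (rule DERIV_nonneg_imp_nondecreasing[of x y E0]) (auto intro: E0_deriv)

lemma E0_less: "x < y \<Longrightarrow> E0 x < E0 y"
  by (rule DERIV_pos_imp_increasing[of x y E0]) (auto intro: E0_deriv)

lemma E0_le: "E0 x \<le> sqrt pi / 2"
proof (rule tendsto_lowerbound[OF E0_lim])
  show "\<forall>\<^sub>F t in at_top. E0 x \<le> E0 t"
    by (rule eventually_mono[OF eventually_ge_at_top[of x]]) (rule E0_mono)
qed simp

lemma M_pos: "0 < M x"
  using E0_less[of x "x+1"] E0_le[of "x+1"] by (simp add: M_def)

lemma M_lim: "(M \<longlongrightarrow> 0) at_top"
proof -
  have "((\<lambda>x. sqrt pi / 2 - E0 x) \<longlongrightarrow> sqrt pi / 2 - sqrt pi / 2) at_top"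
    by (intro tendsto_intros E0_lim)
  then show ?thesis by (simp add: M_def[abs_def])
qed

lemma D_bounds:
  assumes "0 \<le> x" shows "0 \<le> phi1 x" "phi1 x \<le> x * exp (x^2)"
proof -
  show "0 \<le> phi1 x"
    using deriv_mono0[of x phi1 "\<lambda>t. exp (t^2)", OF assms D_deriv] by simp
  have "(\<lambda>x. x * exp (x^2) - phi1 x) 0 \<le> (\<lambda>x. x * exp (x^2) - phi1 x) x"
  proof (rule DERIV_nonneg_imp_nondecreasing[OF assms])
    fix t :: real assume "0 \<le> t" "t \<le> x"
    show "\<exists>y. ((\<lambda>x. x * exp (x^2) - phi1 x) has_real_derivative y) (at t) \<and> 0 \<le> y"
      by (rule exI, rule conjI, (rule derivative_eq_intros refl D_deriv)+) (auto simp: \<open>0 \<le> t\<close>)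
  qed
  then show "phi1 x \<le> x * exp (x^2)" by simp
qed

lemma M_bound:
  assumes x: "0 < x" shows "M x \<le> exp (-(x^2)) / (2 * x)"
proof -
  define G where "G x = exp (-(x^2)) / (2 * x) - M x" for x
  have dG: "(G has_real_derivative - exp (-(t^2)) / (2 * t^2)) (at t)" if "0 < t" for t
    unfolding G_def[abs_def] using that
    by (auto intro!: derivative_eq_intros simp: field_simps power2_eq_square)
  have mono: "G t \<le> G x" if "x \<le> t" for t
  proof (rule DERIV_nonpos_imp_nonincreasing[OF that])
    fix s assume "x \<le> s" "s \<le> t"
    then have "0 < s" using x by simp
    then show "\<exists>y. (G has_real_derivative y) (at s) \<and> y \<le> 0"
      using dG[of s] by (auto intro!: exI[of _ "- exp (-(s^2)) / (2 * s^2)"] simp: divide_nonneg_pos)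
  qed
  have lim: "(G \<longlongrightarrow> 0 - 0) at_top"
    unfolding G_def[abs_def] by (intro tendsto_intros M_lim) real_asymp
  have "0 - 0 \<le> G x"
    by (rule tendsto_upperbound[OF lim]) (auto intro!: eventually_mono[OF eventually_ge_at_top[of x]] mono)
  then show ?thesis by (simp add: G_def)
qed

lemma W_bound:
  assumes x: "0 \<le> x" shows "exp (x^2) * M x \<le> sqrt pi / 2"
proof -
  have "(\<lambda>x. exp (x^2) * M x) x \<le> (\<lambda>x. exp (x^2) * M x) 0"
  proof (rule DERIV_nonpos_imp_nonincreasing[OF x])
    fix t :: real assume t: "0 \<le> t" "t \<le> x"
    have "2 * t * exp (t^2) * M t \<le> 1"
    proof (cases "t = 0")
      case False
      then have "M t \<le> exp (-(t^2)) / (2 * t)" using M_bound t by simp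
      then have "2 * t * exp (t^2) * M t \<le> 2 * t * exp (t^2) * (exp (-(t^2)) / (2 * t))"
        using t by (intro mult_left_mono) auto
      also have "\<dots> = 1" using False by (simp add: field_simps exp_minus)
      finally show ?thesis .
    qed simp
    moreover have "((\<lambda>x. exp (x^2) * M x) has_real_derivative 2 * t * exp (t^2) * M t - 1) (at t)"
      by (auto intro!: derivative_eq_intros simp: algebra_simps mult_exp_exp)
    ultimately show "\<exists>y. ((\<lambda>x. exp (x^2) * M x) has_real_derivative y) (at t) \<and> y \<le> 0"
      by auto
  qed
  then show ?thesis by (simp add: M_def)
qed

lemma PM_bounds:
  assumes x: "0 \<le> x" shows "0 \<le> PM x" "PM x \<le> x * (sqrt pi / 2)"
proof -
  show "0 \<le> PM x"
    using deriv_mono0[of x PM "\<lambda>t. exp (t^2) * M t", OF assms PM_deriv] M_pos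
    by (simp add: less_imp_le)
  have "(\<lambda>x. x * (sqrt pi / 2) - PM x) 0 \<le> (\<lambda>x. x * (sqrt pi / 2) - PM x) x"
  proof (rule DERIV_nonneg_imp_nondecreasing[OF assms])
    fix t :: real assume "0 \<le> t" "t \<le> x"
    have "((\<lambda>x. x * (sqrt pi / 2) - PM x) has_real_derivative sqrt pi / 2 - exp (t^2) * M t) (at t)"
      by (auto intro!: derivative_eq_intros)
    then show "\<exists>y. ((\<lambda>x. x * (sqrt pi / 2) - PM x) has_real_derivative y) (at t) \<and> 0 \<le> y"
      using W_bound[of t] \<open>0 \<le> t\<close> by auto
  qed
  then show "PM x \<le> x * (sqrt pi / 2)" by simp
qed

lemma Q_bounds:
  assumes x: "0 \<le> x" shows "0 \<le> Q x" "Q x \<le> x^2"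
proof -
  show "0 \<le> Q x"
    using deriv_mono0[of x Q "\<lambda>t. exp (-(t^2)) * phi1 t", OF assms Q_deriv] D_bounds
    by simp
  have "(\<lambda>x. x^2 - Q x) 0 \<le> (\<lambda>x. x^2 - Q x) x"
  proof (rule DERIV_nonneg_imp_nondecreasing[OF assms])
    fix t :: real assume t: "0 \<le> t" "t \<le> x"
    have "exp (-(t^2)) * phi1 t \<le> exp (-(t^2)) * (t * exp (t^2))"
      using D_bounds[OF t(1)] by (intro mult_left_mono) auto
    also have "\<dots> = t" by (simp add: exp_minus)
    finally have "exp (-(t^2)) * phi1 t \<le> 2 * t" using t by simp
    moreover have "((\<lambda>x. x^2 - Q x) has_real_derivative 2 * t - exp (-(t^2)) * phi1 t) (at t)"
      by (auto intro!: derivative_eq_intros)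
    ultimately show "\<exists>y. ((\<lambda>x. x^2 - Q x) has_real_derivative y) (at t) \<and> 0 \<le> y"
      by auto
  qed
  then show "Q x \<le> x^2" by simp
qed


definition A :: "real \<Rightarrow> real" where "A v = oint 0 v (\<lambda>u. exp (-(u^2)) * Q u)"
definition B :: "real \<Rightarrow> real" where
  "B v = integral {0..1} (\<lambda>s. exp (-(v^2 * (1 + s^2))) * phi1 (s * v) / (2 * (1 + s^2)))"

lemma D_cont_on[continuous_intros]: "continuous_on S phi1"
  using continuous_on_subset[OF D_cont] by blast

lemma hQ_int:
  assumes u: "0 \<le> u"
  shows "exp (-(u^2)) * Q u = integral {0..1} (\<lambda>s. u * exp (-(u^2 * (1 + s^2))) * phi1 (s * u))"
proof -
  have sub: "((\<lambda>s. u *\<^sub>R (\<lambda>w. exp (-(w^2)) * phi1 w) (s * u)) has_integral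
      integral {0 * u..1 * u} (\<lambda>w. exp (-(w^2)) * phi1 w)) {0..1}"
    by (rule has_integral_substitution[where c=0 and d=u])
       (use u in \<open>auto intro!: derivative_eq_intros continuous_intros simp: mult_left_le_one_le\<close>)
  then have "((\<lambda>s. u * (exp (-((s * u)^2)) * phi1 (s * u))) has_integral Q u) {0..1}"
    using u by (simp add: Q_def oint_pos)
  then have "((\<lambda>s. exp (-(u^2)) * (u * (exp (-((s * u)^2)) * phi1 (s * u)))) has_integral exp (-(u^2)) * Q u) {0..1}"
    by (rule has_integral_mult_right)
  moreover have "\<And>s. exp (-(u^2)) * (u * (exp (-((s * u)^2)) * phi1 (s * u))) = u * exp (-(u^2 * (1 + s^2))) * phi1 (s * u)"
    by (simp add: algebra_simps mult_exp_exp power_mult_distrib)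
  ultimately show ?thesis by (simp add: integral_unique)
qed

lemma inner_int:
  assumes v: "0 \<le> v"
  shows "integral {0..v} (\<lambda>u. u * exp (-(u^2 * (1 + s^2))) * phi1 (s * u)) =
     s / (2 * (1 + s^2)) * E0 v - exp (-(v^2 * (1 + s^2))) * phi1 (s * v) / (2 * (1 + s^2))"
proof -
  have pos: "0 < 1 + s^2" by (simp add: add_pos_nonneg)
  have e: "\<And>u. exp (-(u^2 * (1 + s^2))) * exp ((s * u)^2) = exp (-(u^2))"
    by (simp add: mult_exp_exp algebra_simps power_mult_distrib)
  have "oint 0 v (\<lambda>u. u * exp (-(u^2 * (1 + s^2))) * phi1 (s * u)) =
     (\<lambda>v. s / (2 * (1 + s^2)) * E0 v - exp (-(v^2 * (1 + s^2))) * phi1 (s * v) / (2 * (1 + s^2))) v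
   - (\<lambda>v. s / (2 * (1 + s^2)) * E0 v - exp (-(v^2 * (1 + s^2))) * phi1 (s * v) / (2 * (1 + s^2))) 0"
  proof (rule oint_eq)
    show "continuous_on UNIV (\<lambda>u. u * exp (-(u^2 * (1 + s^2))) * phi1 (s * u))"
      by (intro continuous_intros continuous_on_compose2[OF D_cont]) auto
    fix x :: real
    have ne: "2 + 2 * s^2 \<noteq> 0" by (smt (verit) zero_le_power2)
    have ne2: "4 + (4 * s ^ 4 + 8 * s^2) \<noteq> 0" 
    proof -
      have "0 \<le> s ^ 4" by (simp add: zero_le_even_power)
      then show ?thesis using zero_le_power2[of s] by linarith
    qed
    have e': "exp ((s * x)^2) * s * exp (-(x^2 * (1 + s^2))) = s * exp (-(x^2))"
      using e[of x] by (simp add: algebra_simps)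
    show "((\<lambda>v. s / (2 * (1 + s^2)) * E0 v - exp (-(v^2 * (1 + s^2))) * phi1 (s * v) / (2 * (1 + s^2)))
       has_real_derivative x * exp (-(x^2 * (1 + s^2))) * phi1 (s * x)) (at x)"
      apply (rule derivative_eq_intros refl D_deriv[THEN DERIV_chain2] E0_deriv)+
       apply (simp_all add: ne e')
      apply (simp add: field_simps ne ne2)
      done
  qed
  then show ?thesis using v by (simp add: oint_pos)
qed

lemma log_int: "integral {0..1} (\<lambda>s::real. s / (2 * (1 + s^2))) = ln 2 / 4"
proof -
  have "oint 0 1 (\<lambda>s::real. s / (2 * (1 + s^2))) = (\<lambda>s. ln (1 + s^2) / 4) 1 - (\<lambda>s. ln (1 + s^2) / 4) 0"
  proof (rule oint_eq)
    show "continuous_on UNIV (\<lambda>s::real. s / (2 * (1 + s^2)))"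
      by (intro continuous_intros) (simp add: add_pos_nonneg add_nonneg_eq_0_iff)
    fix x :: real
    have pos: "0 < 1 + x^2" by (simp add: add_pos_nonneg)
    show "((\<lambda>s. ln (1 + s^2) / 4) has_real_derivative x / (2 * (1 + x^2))) (at x)"
      using pos by (auto intro!: derivative_eq_intros simp: field_simps)
  qed
  then show ?thesis by (simp add: oint_pos)
qed

lemma A_eq:
  assumes v: "0 \<le> v"
  shows "A v = ln 2 / 4 * E0 v - B v"
proof -
  define \<Phi> where "\<Phi> u s = u * exp (-(u^2 * (1 + s^2))) * phi1 (s * u)" for u s :: real
  have cP: "continuous_on UNIV (\<lambda>(u, s). \<Phi> u s)"
    unfolding \<Phi>_def case_prod_beta'
    by (intro continuous_intros continuous_on_compose2[OF D_cont]) auto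
  have "A v = integral {0..v} (\<lambda>u. exp (-(u^2)) * Q u)"
    using v by (simp add: A_def oint_pos)
  also have "\<dots> = integral {0..v} (\<lambda>u. integral {0..1} (\<lambda>s. \<Phi> u s))"
    by (rule integral_cong) (simp add: hQ_int \<Phi>_def)
  also have "\<dots> = integral {0..1} (\<lambda>s. integral {0..v} (\<lambda>u. \<Phi> u s))"
    using integral_swap_continuous[of 0 0 v 1 \<Phi>] continuous_on_subset[OF cP]
    by (simp add: cbox_interval)
  also have "\<dots> = integral {0..1} (\<lambda>s. s / (2 * (1 + s^2)) * E0 v - exp (-(v^2 * (1 + s^2))) * phi1 (s * v) / (2 * (1 + s^2)))"
    by (rule integral_cong) (simp add: \<Phi>_def inner_int[OF v])
  also have "\<dots> = integral {0..1} (\<lambda>s. s / (2 * (1 + s^2)) * E0 v) - B v"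
    unfolding B_def
    by (rule integral_diff; rule integrable_continuous_real;
        intro continuous_intros continuous_on_compose2[OF D_cont])
       (auto simp: add_pos_nonneg add_nonneg_eq_0_iff)
  also have "integral {0..1} (\<lambda>s. s / (2 * (1 + s^2)) * E0 v) = ln 2 / 4 * E0 v"
    using log_int Henstock_Kurzweil_Integration.integral_mult_left[of "{0..1}" "\<lambda>s::real. s / (2 * (1 + s^2))" "E0 v"]
    by simp
  finally show ?thesis .
qed


definition S :: "real \<Rightarrow> real" where "S v = sqrt pi / 2 * Q v - R v"

lemma S_id: "S v = 2 * A v + 2 * M v * Q v + (M v)^2 * phi1 v - M v * PM v"
proof -
  have "A v = (\<lambda>v. (S v - 2 * M v * Q v - (M v)^2 * phi1 v + M v * PM v) / 2) v
            - (\<lambda>v. (S v - 2 * M v * Q v - (M v)^2 * phi1 v + M v * PM v) / 2) 0"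
    unfolding A_def
  proof (rule oint_eq)
    show "continuous_on UNIV (\<lambda>u. exp (- u\<^sup>2) * Q u)" by (intro continuous_intros)
    fix x :: real
    show "((\<lambda>v. (S v - 2 * M v * Q v - (M v)^2 * phi1 v + M v * PM v) / 2) has_real_derivative
        exp (- x\<^sup>2) * Q x) (at x)"
      unfolding S_def[abs_def]
      by (auto intro!: derivative_eq_intros simp: PM_def M_def field_simps power2_eq_square)
  qed
  then show ?thesis by (simp add: S_def)
qed

lemma B_bounds:
  assumes v: "0 \<le> v" shows "0 \<le> B v" "B v \<le> v * exp (-(v^2)) / 2"
proof -
  define f where "f s = exp (-(v^2 * (1 + s^2))) * phi1 (s * v) / (2 * (1 + s^2))" for s
  have pos: "\<And>s::real. 0 < 1 + s^2" by (simp add: add_pos_nonneg)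
  have ne2: "\<And>s::real. 2 + 2 * s^2 \<noteq> 0" by (smt (verit) zero_le_power2)
  have cf: "continuous_on {0..1} f" unfolding f_def
    by (intro continuous_intros continuous_on_compose2[OF D_cont]) (auto simp: ne2)
  have nn: "0 \<le> f s" if "s \<in> {0..1}" for s
    using that D_bounds(1)[of "s * v"] v pos[of s] unfolding f_def by simp
  have le: "f s \<le> v * exp (-(v^2)) / 2" if s: "s \<in> {0..1}" for s
  proof -
    have sv: "0 \<le> s * v" using s v by simp
    have "f s \<le> exp (-(v^2 * (1 + s^2))) * (s * v * exp ((s * v)^2)) / (2 * (1 + s^2))"
      unfolding f_def using D_bounds(2)[OF sv] pos[of s]
      by (intro divide_right_mono mult_left_mono) auto
    also have "exp (-(v^2 * (1 + s^2))) * (s * v * exp ((s * v)^2)) = s * v * exp (-(v^2))"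
      by (simp add: mult_exp_exp algebra_simps power_mult_distrib)
    also have "s * v * exp (-(v^2)) / (2 * (1 + s^2)) \<le> s * v * exp (-(v^2)) / 2"
      using sv pos[of s] by (intro divide_left_mono) auto
    also have "\<dots> \<le> v * exp (-(v^2)) / 2"
      using s v by (intro divide_right_mono mult_right_mono mult_left_le_one_le) auto
    finally show ?thesis .
  qed
  show "0 \<le> B v"
    unfolding B_def f_def[symmetric] by (rule integral_nonneg) (auto intro: integrable_continuous_real cf nn)
  have "B v \<le> integral {0..1} (\<lambda>s::real. v * exp (-(v^2)) / 2)"
    unfolding B_def f_def[symmetric]
  proof (rule Henstock_Kurzweil_Integration.integral_le)
    show "f integrable_on {0..1}" by (rule integrable_continuous_real[OF cf])
    show "(\<lambda>s::real. v * exp (-(v^2)) / 2) integrable_on {0..1}"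
      by (rule integrable_continuous_real) (intro continuous_intros)
    show "\<And>x. x \<in> {0..1} \<Longrightarrow> f x \<le> v * exp (-(v^2)) / 2" by (rule le)
  qed
  then show "B v \<le> v * exp (-(v^2)) / 2" by simp
qed

lemma S_lim: "(S \<longlongrightarrow> sqrt pi * ln 2 / 4) at_top"
proof -
  have B0: "(B \<longlongrightarrow> 0) at_top"
  proof (rule tendsto_sandwich[where f="\<lambda>_. 0" and h="\<lambda>v. v * exp (-(v^2)) / 2"])
    show "\<forall>\<^sub>F v in at_top. 0 \<le> B v"
      by (rule eventually_mono[OF eventually_ge_at_top[of 0]]) (rule B_bounds)
    show "\<forall>\<^sub>F v in at_top. B v \<le> v * exp (-(v^2)) / 2"
      by (rule eventually_mono[OF eventually_ge_at_top[of 0]]) (rule B_bounds)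
    show "((\<lambda>v::real. v * exp (-(v^2)) / 2) \<longlongrightarrow> 0) at_top" by real_asymp
  qed simp
  have MQ0: "((\<lambda>v. M v * Q v) \<longlongrightarrow> 0) at_top"
  proof (rule tendsto_sandwich[where f="\<lambda>_. 0" and h="\<lambda>v. v * exp (-(v^2)) / 2"])
    show "\<forall>\<^sub>F v in at_top. 0 \<le> M v * Q v"
      by (rule eventually_mono[OF eventually_ge_at_top[of 0]])
         (metis mult_nonneg_nonneg less_imp_le M_pos Q_bounds(1))
    show "\<forall>\<^sub>F v in at_top. M v * Q v \<le> v * exp (-(v^2)) / 2"
    proof (rule eventually_mono[OF eventually_gt_at_top[of 0]])
      fix v :: real assume v: "0 < v"
      have "M v * Q v \<le> exp (-(v^2)) / (2 * v) * v^2"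
        using M_bound[OF v] Q_bounds[of v] M_pos[of v] v by (intro mult_mono) auto
      also have "\<dots> = v * exp (-(v^2)) / 2" using v by (simp add: field_simps power2_eq_square)
      finally show "M v * Q v \<le> v * exp (-(v^2)) / 2" .
    qed
    show "((\<lambda>v::real. v * exp (-(v^2)) / 2) \<longlongrightarrow> 0) at_top" by real_asymp
  qed simp
  have MMD0: "((\<lambda>v. (M v)^2 * phi1 v) \<longlongrightarrow> 0) at_top"
  proof (rule tendsto_sandwich[where f="\<lambda>_. 0" and h="\<lambda>v. M v / 2"])
    show "\<forall>\<^sub>F v in at_top. 0 \<le> (M v)^2 * phi1 v"
      by (rule eventually_mono[OF eventually_ge_at_top[of 0]]) (use D_bounds in auto)
    show "\<forall>\<^sub>F v in at_top. (M v)^2 * phi1 v \<le> M v / 2"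
    proof (rule eventually_mono[OF eventually_gt_at_top[of 0]])
      fix v :: real assume v: "0 < v"
      have "M v * phi1 v \<le> exp (-(v^2)) / (2 * v) * (v * exp (v^2))"
        using M_bound[OF v] D_bounds[of v] M_pos[of v] v by (intro mult_mono) auto
      also have "\<dots> = 1 / 2" using v by (simp add: field_simps exp_minus)
      finally have "M v * (M v * phi1 v) \<le> M v * (1/2)"
        using M_pos[of v] by (intro mult_left_mono) auto
      then show "(M v)^2 * phi1 v \<le> M v / 2" by (simp add: power2_eq_square algebra_simps)
    qed
    show "((\<lambda>v. M v / 2) \<longlongrightarrow> 0) at_top" using tendsto_divide[OF M_lim tendsto_const[of 2]] by simp
  qed simp
  have MPM0: "((\<lambda>v. M v * PM v) \<longlongrightarrow> 0) at_top"
  proof (rule tendsto_sandwich[where f="\<lambda>_. 0" and h="\<lambda>v. exp (-(v^2)) * sqrt pi / 4"])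
    show "\<forall>\<^sub>F v in at_top. 0 \<le> M v * PM v"
      by (rule eventually_mono[OF eventually_ge_at_top[of 0]])
         (metis mult_nonneg_nonneg less_imp_le M_pos PM_bounds(1))
    show "\<forall>\<^sub>F v in at_top. M v * PM v \<le> exp (-(v^2)) * sqrt pi / 4"
    proof (rule eventually_mono[OF eventually_gt_at_top[of 0]])
      fix v :: real assume v: "0 < v"
      have "M v * PM v \<le> exp (-(v^2)) / (2 * v) * (v * (sqrt pi / 2))"
        using M_bound[OF v] PM_bounds[of v] M_pos[of v] v by (intro mult_mono) auto
      also have "\<dots> = exp (-(v^2)) * sqrt pi / 4" using v by (simp add: field_simps)
      finally show "M v * PM v \<le> exp (-(v^2)) * sqrt pi / 4" .
    qed
    show "((\<lambda>v::real. exp (-(v^2)) * sqrt pi / 4) \<longlongrightarrow> 0) at_top" by real_asymp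
  qed simp
  have lim: "((\<lambda>v. 2 * (ln 2 / 4 * E0 v - B v) + 2 * (M v * Q v) + (M v)^2 * phi1 v - M v * PM v)
     \<longlongrightarrow> 2 * (ln 2 / 4 * (sqrt pi / 2) - 0) + 2 * 0 + 0 - 0) at_top"
    by (intro tendsto_intros E0_lim B0 MQ0 MMD0 MPM0)
  have ev: "\<forall>\<^sub>F v in at_top. 2 * (ln 2 / 4 * E0 v - B v) + 2 * (M v * Q v) + (M v)^2 * phi1 v - M v * PM v = S v"
    by (rule eventually_mono[OF eventually_ge_at_top[of 0]]) (simp add: S_id A_eq)
  have "(S \<longlongrightarrow> 2 * (ln 2 / 4 * (sqrt pi / 2) - 0) + 2 * 0 + 0 - 0) at_top"
    by (rule Lim_transform_eventually[OF lim ev])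
  then show ?thesis by (simp add: field_simps)
qed


definition K :: "real \<Rightarrow> real" where "K y = sqrt pi * Q y + 2 * R y"
definition L :: real where "L = sqrt pi * ln 2 / 2"

lemma chi1_alt: "chi 1 u = sqrt pi * phi1 u + 2 * P u"
  by (subst chi1_eq) (simp add: psi1_eq)

lemma cf1: "continuous_on UNIV (\<lambda>u. exp (-(u^2)) * chi 1 u)"
  unfolding chi1_alt by (intro continuous_intros)

lemma K_deriv[derivative_intros]: "(K has_real_derivative exp (-(x^2)) * chi 1 x) (at x)"
  unfolding K_def[abs_def] chi1_alt by (auto intro!: derivative_eq_intros simp: algebra_simps)

lemma K_0[simp]: "K 0 = 0" by (simp add: K_def)

lemma K_lim: "(K \<longlongrightarrow> L) at_bot"
proof -
  have "((\<lambda>v. 2 * S v) \<longlongrightarrow> 2 * (sqrt pi * ln 2 / 4)) at_top"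
    by (intro tendsto_intros S_lim)
  moreover have "\<And>v. 2 * S v = K (-v)"
    by (simp add: S_def K_def Q_even R_odd algebra_simps)
  ultimately have "((\<lambda>v. K (-v)) \<longlongrightarrow> L) at_top" by (simp add: L_def)
  then show ?thesis
    unfolding at_bot_mirror tendsto_compose_filtermap[symmetric] by (simp add: o_def)
qed

lemma chi1_nonpos: "x \<le> 0 \<Longrightarrow> chi 1 x \<le> 0"
proof -
  assume x: "x \<le> 0"
  have "chi 1 x = - 2 * PM (-x)"
    unfolding chi1_alt PM_def using D_odd[of "-x"] P_even[of "-x"] by simp
  then show ?thesis using PM_bounds(1)[of "-x"] x by simp
qed

lemma key_int: "((\<lambda>u. exp (-(u^2)) * chi 1 u) has_integral (K y - L)) {..y}"
proof -
  have neg: "((\<lambda>u. exp (-(u^2)) * chi 1 u) has_integral (K y - L)) {..y}" if y: "y \<le> 0" for y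
  proof -
    have "((\<lambda>u. - (exp (-(u^2)) * chi 1 u)) has_integral (\<lambda>u. L - K u) y) {..y}"
    proof (rule imp_int)
      show "\<And>x. ((\<lambda>u. L - K u) has_real_derivative - (exp (-(x^2)) * chi 1 x)) (at x)"
        by (auto intro!: derivative_eq_intros)
      show "continuous_on UNIV (\<lambda>u. - (exp (- u\<^sup>2) * chi 1 u))"
        by (intro continuous_intros cf1)
      show "\<And>x. x < y \<Longrightarrow> 0 \<le> - (exp (- x\<^sup>2) * chi 1 x)"
        using chi1_nonpos y by (simp add: mult_nonneg_nonpos)
      have "((\<lambda>u. L - K u) \<longlongrightarrow> L - L) at_bot" by (intro tendsto_intros K_lim)
      then show "((\<lambda>u. L - K u) \<longlongrightarrow> 0) at_bot" by simp
    qed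
    from has_integral_neg[OF this] show ?thesis by simp
  qed
  show ?thesis
  proof (cases "y \<le> 0")
    case True then show ?thesis by (rule neg)
  next
    case False
    have i1: "((\<lambda>u. exp (-(u^2)) * chi 1 u) has_integral (K 0 - L)) {..0}" by (rule neg) simp
    have "oint 0 y (\<lambda>u. exp (-(u^2)) * chi 1 u) = K y - K 0"
      by (rule oint_eq[OF cf1 K_deriv])
    then have "integral {0..y} (\<lambda>u. exp (-(u^2)) * chi 1 u) = K y"
      using False by (simp add: oint_pos)
    moreover have "(\<lambda>u. exp (-(u^2)) * chi 1 u) integrable_on {0..y}"
      by (rule integrable_continuous_real) (rule continuous_on_subset[OF cf1], simp)
    ultimately have i2: "((\<lambda>u. exp (-(u^2)) * chi 1 u) has_integral K y) {0..y}"
      by (metis has_integral_integral)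
    have "((\<lambda>u. exp (-(u^2)) * chi 1 u) has_integral (K 0 - L + K y)) ({..0} \<union> {0..y})"
      by (rule has_integral_Un[OF i1 i2]) (rule negligible_subset[of "{0}"], auto)
    moreover have "{..0} \<union> {0..y} = {..y}" using False by auto
    ultimately show ?thesis by simp
  qed
qed

definition T2 :: "real \<Rightarrow> real" where "T2 x = oint 0 x (\<lambda>t. exp (t^2) * Q t)"
definition U2 :: "real \<Rightarrow> real" where "U2 x = oint 0 x (\<lambda>t. exp (t^2) * R t)"

lemma T2_deriv[derivative_intros]: "(T2 has_real_derivative exp (x^2) * Q x) (at x)"
  unfolding T2_def[abs_def] by (rule oint_deriv) (intro continuous_intros)
lemma U2_deriv[derivative_intros]: "(U2 has_real_derivative exp (x^2) * R x) (at x)"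
  unfolding U2_def[abs_def] by (rule oint_deriv) (intro continuous_intros)

lemma chi2_eq: "chi 2 z = sqrt pi * (phi2 z - ln 2 * phi1 z) + psi2 z"
proof -
  have "chi 2 z = 2 * oint 0 z (\<lambda>y. exp (y^2) * integral {..y} (\<lambda>u. exp (-(u^2)) * chi 1 u))"
    by (metis chi.simps(2) Suc_1)
  also have "(\<lambda>y. integral {..y} (\<lambda>u. exp (-(u^2)) * chi 1 u)) = (\<lambda>y. K y - L)"
    by (rule ext, rule integral_unique[OF key_int])
  also have "oint 0 z (\<lambda>y. exp (y^2) * (K y - L)) =
      (\<lambda>z. (sqrt pi * (2 * T2 z - ln 2 * phi1 z) + 4 * U2 z) / 2) z
    - (\<lambda>z. (sqrt pi * (2 * T2 z - ln 2 * phi1 z) + 4 * U2 z) / 2) 0"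
  proof (rule oint_eq)
    show "continuous_on UNIV (\<lambda>y. exp (y\<^sup>2) * (K y - L))"
      unfolding K_def[abs_def] by (intro continuous_intros)
    fix x :: real
    show "((\<lambda>z. (sqrt pi * (2 * T2 z - ln 2 * phi1 z) + 4 * U2 z) / 2) has_real_derivative
        exp (x\<^sup>2) * (K x - L)) (at x)"
      by (auto intro!: derivative_eq_intros simp: K_def L_def field_simps)
  qed
  finally show ?thesis
    by (simp add: phi2_eq psi2_eq T2_def[symmetric] U2_def[symmetric] T2_def U2_def algebra_simps)
qed

theorem lemma2:
  shows "(\<forall>z. chi 1 z = sqrt pi * phi1 z + psi1 z)
       \<and> (\<forall>z. chi 2 z = sqrt pi * (phi2 z - ln 2 * phi1 z) + psi2 z)
       \<and> (\<forall>x. phi1 (-x) = - phi1 x) \<and> (\<forall>x. phi2 (-x) = - phi2 x)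
       \<and> (\<forall>x. psi1 (-x) = psi1 x) \<and> (\<forall>x. psi2 (-x) = psi2 x)"
  using chi1_eq chi2_eq D_odd phi2_odd psi1_even psi2_even by blast

end
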